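(* Let $Q_+$ be an affine semigroup with $Q=\mathbb{Z}Q_+\cong\mathbb{Z}^d$, and let $\{M^1_n\}_{n\in\mathbb{Z}^k},\dots,\{M^r_n\}_{n\in\mathbb{Z}^k}$ be constructible families of $Q$-modules. Then the functions $n\mapsto\max\{i\mid M^i_n\neq0\}$ and $n\mapsto\min\{i\mid M^i_n\neq0\}$ (defined for those $n$ where some $M^i_n\neq0$) are piecewise quasiconstant, i.e., piecewise quasipolynomial of degree $0$.
   Context: $\Bbbk$ is a field; an affine semigroup is a finitely generated submonoid with trivial units of a free abelian group, and $Q$ is ordered by $q\preceq q'$ iff $q'-q\in Q_+$. Semisimple subset: finite disjoint union of sets $q+N$ with $N$ generated by linearly independent elements. A Presburger group is a partially ordered free abelian group of finite rank whose positive cone is semisimple and generates a finite-index subgroup. A module over a Presburger group $G$ (a $G$-graded $\Bbbk[G_+]$-module) is constructible if its graded pieces are finite-dimensional and $G$ can be partitioned into finitely many semisimple regions $I$ with vector spaces $M_I$ and isomorphisms $M_I\to M_g$ ($g\in I$) such that for $g\in I$, $h\in J$, $g\preceq h$, the composite $M_I\to M_g\to M_h\to M_J$ depends only on $I,J$. A family $\{M_n\}_{n\in\mathbb{Z}^k}$ of $Q$-modules is constructible if for some Presburger group $G=\mathbb{Z}^k\times Q$ whose positive cone $G_+$ satisfies $G_+\cap(\{0\}\times Q)=\{0\}\times Q_+$ (a Rees monoid), the direct sum $\bigoplus_nM_n(-n)$ with $M_n$ in slice $\{n\}\times Q$ is a $G$-graded $\Bbbk[G_+]$-module extending the slice structures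 and is constructible. Piecewise quasipolynomial: on each of finitely many rational convex polyhedra covering $\mathbb{Z}^k$, the function agrees with a function that is polynomial on each coset of some finite-index sublattice. *)

theory Defs
  imports "Jordan_Normal_Form.Matrix"
begin

type_synonym zvec = "nat \<Rightarrow> int"

definition Zv :: "nat \<Rightarrow> zvec set" where
  "Zv m = {v. \<forall>i\<ge>m. v i = 0}"

definition vzero :: zvec where "vzero = (\<lambda>i. 0)"
definition vadd :: "zvec \<Rightarrow> zvec \<Rightarrow> zvec" where "vadd x y = (\<lambda>i. x i + y i)"
definition vneg :: "zvec \<Rightarrow> zvec" where "vneg x = (\<lambda>i. - x i)"
definition vsub :: "zvec \<Rightarrow> zvec \<Rightarrow> zvec" where "vsub x y = (\<lambda>i. x i - y i)"
definition smul :: "int \<Rightarrow> zvec \<Rightarrow> zvec" where "smul c v = (\<lambda>i. c * v i)"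

definition lincomb :: "(nat \<Rightarrow> int) \<Rightarrow> zvec list \<Rightarrow> zvec" where
  "lincomb c vs = (\<lambda>i. (\<Sum>j<length vs. c j * (vs ! j) i))"

definition lin_indep :: "zvec list \<Rightarrow> bool" where
  "lin_indep vs \<longleftrightarrow> (\<forall>c. lincomb c vs = vzero \<longrightarrow> (\<forall>j<length vs. c j = 0))"

definition nat_span :: "zvec list \<Rightarrow> zvec set" where
  "nat_span vs = {lincomb (\<lambda>j. int (c j)) vs | c :: nat \<Rightarrow> nat. True}"

definition int_span :: "zvec set \<Rightarrow> zvec set" where
  "int_span S = {lincomb c vs | c vs. set vs \<subseteq> S}"

definition semisimple :: "nat \<Rightarrow> zvec set \<Rightarrow> bool" where
  "semisimple m S \<longleftrightarrow> S \<subseteq> Zv m \<and>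
     (\<exists>parts :: (zvec \<times> zvec list) list.
        (\<forall>(q, vs) \<in> set parts. q \<in> Zv m \<and> set vs \<subseteq> Zv m \<and> lin_indep vs) \<and>
        S = (\<Union>(q, vs) \<in> set parts. vadd q ` nat_span vs) \<and>
        (\<forall>i<length parts. \<forall>j<length parts. i \<noteq> j \<longrightarrow>
           (vadd (fst (parts ! i)) ` nat_span (snd (parts ! i))) \<inter>
           (vadd (fst (parts ! j)) ` nat_span (snd (parts ! j))) = {}))"

definition finite_index :: "nat \<Rightarrow> zvec set \<Rightarrow> bool" where
  "finite_index m H \<longleftrightarrow> finite ((\<lambda>x. vadd x ` H) ` Zv m)"

definition subgroup_Z :: "nat \<Rightarrow> zvec set \<Rightarrow> bool" where
  "subgroup_Z m L \<longleftrightarrow> L \<subseteq> Zv m \<and> vzero \<in> L \<and>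
     (\<forall>x\<in>L. \<forall>y\<in>L. vadd x y \<in> L) \<and> (\<forall>x\<in>L. vneg x \<in> L)"

text \<open>Positive cone of a Presburger group structure on Z^m (partial order g <= h iff h - g in P)\<close>
definition presburger_cone :: "nat \<Rightarrow> zvec set \<Rightarrow> bool" where
  "presburger_cone m P \<longleftrightarrow> P \<subseteq> Zv m \<and> vzero \<in> P \<and>
     (\<forall>x\<in>P. \<forall>y\<in>P. vadd x y \<in> P) \<and>
     P \<inter> vneg ` P = {vzero} \<and>
     semisimple m P \<and> finite_index m (int_span P)"

definition affine_semigroup :: "nat \<Rightarrow> zvec set \<Rightarrow> bool" where
  "affine_semigroup d Qp \<longleftrightarrow> Qp \<subseteq> Zv d \<and>
     (\<exists>gens. set gens \<subseteq> Zv d \<and> Qp = nat_span gens) \<and>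
     Qp \<inter> vneg ` Qp = {vzero}"

text \<open>A Z^m-graded k[P]-module with finite-dimensional graded pieces, given by the
  dimension dm g of the piece in degree g (the piece being k^(dm g)) and the matrix
  act a g : M_g -> M_(g+a) of multiplication by the monomial x^a, a in P.\<close>
definition gmodule :: "nat \<Rightarrow> zvec set \<Rightarrow> (zvec \<Rightarrow> nat) \<Rightarrow> (zvec \<Rightarrow> zvec \<Rightarrow> 'k::field mat) \<Rightarrow> bool" where
  "gmodule m P dm act \<longleftrightarrow>
     (\<forall>a\<in>P. \<forall>g\<in>Zv m. act a g \<in> carrier_mat (dm (vadd g a)) (dm g)) \<and>
     (\<forall>g\<in>Zv m. act vzero g = 1\<^sub>m (dm g)) \<and>
     (\<forall>a\<in>P. \<forall>b\<in>P. \<forall>g\<in>Zv m. act (vadd a b) g = act b (vadd g a) * act a g)"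

definition constructible_gmod :: "nat \<Rightarrow> zvec set \<Rightarrow> (zvec \<Rightarrow> nat) \<Rightarrow> (zvec \<Rightarrow> zvec \<Rightarrow> 'k::field mat) \<Rightarrow> bool" where
  "constructible_gmod m P dm act \<longleftrightarrow>
     (\<exists>(regions :: zvec set list) (dI :: nat \<Rightarrow> nat) (phi :: nat \<Rightarrow> zvec \<Rightarrow> 'k mat) (psi :: nat \<Rightarrow> nat \<Rightarrow> 'k mat).
        (\<forall>j<length regions. semisimple m (regions ! j)) \<and>
        (\<forall>i<length regions. \<forall>j<length regions. i \<noteq> j \<longrightarrow> regions ! i \<inter> regions ! j = {}) \<and>
        \<Union>(set regions) = Zv m \<and>
        (\<forall>j<length regions. \<forall>g\<in>regions ! j.
            phi j g \<in> carrier_mat (dm g) (dI j) \<and> invertible_mat (phi j g)) \<and>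
        (\<forall>i<length regions. \<forall>j<length regions. \<forall>g\<in>regions ! i. \<forall>h\<in>regions ! j.
            vsub h g \<in> P \<longrightarrow>
              psi i j \<in> carrier_mat (dI j) (dI i) \<and>
              act (vsub h g) g * phi i g = phi j h * psi i j))"

definition emb :: "nat \<Rightarrow> zvec \<Rightarrow> zvec \<Rightarrow> zvec" where
  "emb k n q = (\<lambda>i. if i < k then n i else q (i - k))"

text \<open>A constructible family {M_n}_(n in Z^k) of Q-modules, Q = Z^d with positive cone Qp;
  M_n has graded pieces of dimension dimf n q and action matrices actf n a q.\<close>
definition constructible_family ::
  "nat \<Rightarrow> nat \<Rightarrow> zvec set \<Rightarrow> (zvec \<Rightarrow> zvec \<Rightarrow> nat) \<Rightarrow> (zvec \<Rightarrow> zvec \<Rightarrow> zvec \<Rightarrow> 'k::field mat) \<Rightarrow> bool" where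
  "constructible_family k d Qp dimf actf \<longleftrightarrow>
     (\<forall>n\<in>Zv k. gmodule d Qp (dimf n) (actf n)) \<and>
     (\<exists>P (dm :: zvec \<Rightarrow> nat) (act :: zvec \<Rightarrow> zvec \<Rightarrow> 'k mat).
        presburger_cone (k + d) P \<and>
        P \<inter> emb k vzero ` Zv d = emb k vzero ` Qp \<and>
        gmodule (k + d) P dm act \<and>
        (\<forall>n\<in>Zv k. \<forall>q\<in>Zv d. dm (emb k n q) = dimf n q) \<and>
        (\<forall>n\<in>Zv k. \<forall>q\<in>Zv d. \<forall>a\<in>Qp. act (emb k vzero a) (emb k n q) = actf n a q) \<and>
        constructible_gmod (k + d) P dm act)"

definition rat_polyhedron :: "nat \<Rightarrow> ((nat \<Rightarrow> rat) \<times> rat) list \<Rightarrow> (nat \<Rightarrow> real) set" where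
  "rat_polyhedron k ineqs = {x. (\<forall>i\<ge>k. x i = 0) \<and>
     (\<forall>(a, b) \<in> set ineqs. (\<Sum>i<k. of_rat (a i) * x i) \<le> of_rat b)}"

definition int_to_real :: "zvec \<Rightarrow> (nat \<Rightarrow> real)" where
  "int_to_real n = (\<lambda>i. of_int (n i))"

definition piecewise_quasiconstant :: "nat \<Rightarrow> zvec set \<Rightarrow> (zvec \<Rightarrow> 'b) \<Rightarrow> bool" where
  "piecewise_quasiconstant k D f \<longleftrightarrow>
     (\<exists>polys :: ((nat \<Rightarrow> rat) \<times> rat) list list.
        (\<forall>n\<in>Zv k. \<exists>P\<in>set polys. int_to_real n \<in> rat_polyhedron k P) \<and>
        (\<forall>P\<in>set polys. \<exists>L (c :: zvec \<Rightarrow> 'b).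
            subgroup_Z k L \<and> finite_index k L \<and>
            (\<forall>x\<in>Zv k. \<forall>y\<in>Zv k. vsub x y \<in> L \<longrightarrow> c x = c y) \<and>
            (\<forall>n\<in>D. int_to_real n \<in> rat_polyhedron k P \<longrightarrow> f n = c n)))"

end

theory Submission
  imports Defs "HOL-Decision_Procs.Cooper"
begin


definition lat :: "nat \<Rightarrow> nat \<Rightarrow> zvec set" where
  "lat m k = {v \<in> Zv k. \<forall>i<k. int m dvd v i}"

definition cover :: "nat \<Rightarrow> ((nat \<Rightarrow> rat) \<times> rat) list list \<Rightarrow> bool" where
  "cover k ps \<longleftrightarrow> (\<forall>n\<in>Zv k. \<exists>P\<in>set ps. int_to_real n \<in> rat_polyhedron k P)"

definition periodic :: "nat \<Rightarrow> nat \<Rightarrow> zvec set \<Rightarrow> bool" where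
  "periodic k m Per \<longleftrightarrow> (\<forall>x\<in>Zv k. \<forall>y\<in>Zv k. vsub x y \<in> lat m k \<longrightarrow> (x \<in> Per \<longleftrightarrow> y \<in> Per))"

definition agree :: "nat \<Rightarrow> (nat \<Rightarrow> real) set \<Rightarrow> zvec set \<Rightarrow> zvec set \<Rightarrow> bool" where
  "agree k S X Per \<longleftrightarrow> (\<forall>n\<in>Zv k. int_to_real n \<in> S \<longrightarrow> (n \<in> X \<longleftrightarrow> n \<in> Per))"

definition good :: "nat \<Rightarrow> zvec set \<Rightarrow> bool" where
  "good k X \<longleftrightarrow> (\<exists>ps. cover k ps \<and> (\<forall>P\<in>set ps. \<exists>m>0. \<exists>Per.
      periodic k m Per \<and> agree k (rat_polyhedron k P) X Per))"

lemma lat_subgroup: "subgroup_Z k (lat m k)"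
  unfolding subgroup_Z_def lat_def Zv_def vzero_def vadd_def vneg_def by auto

lemma lat_mult: "lat (m * m') k \<subseteq> lat m k"
  unfolding lat_def by (auto simp: dvd_mult_left)

lemma periodic_mult: "periodic k m Per \<Longrightarrow> periodic k (m * m') Per"
  unfolding periodic_def using lat_mult by blast

lemma periodic_mult2: "periodic k m Per \<Longrightarrow> periodic k (m' * m) Per"
  using periodic_mult[of k m Per m'] by (simp add: mult.commute)

lemma lat_coset_eq:
  assumes "vsub x y \<in> lat m k"
  shows "vadd x ` lat m k = vadd y ` lat m k"
proof -
  have L: "subgroup_Z k (lat m k)" by (rule lat_subgroup)
  have 1: "vadd x z = vadd y (vadd (vsub x y) z)" for z
    by (auto simp: vadd_def vsub_def)
  have 2: "vadd y z = vadd x (vadd (vneg (vsub x y)) z)" for z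
    by (auto simp: vadd_def vsub_def vneg_def)
  show ?thesis
  proof
    show "vadd x ` lat m k \<subseteq> vadd y ` lat m k"
      using L assms 1 unfolding subgroup_Z_def by (auto intro!: image_eqI)
    show "vadd y ` lat m k \<subseteq> vadd x ` lat m k"
      using L assms 2 unfolding subgroup_Z_def by (auto intro!: image_eqI)
  qed
qed

lemma lat_finite_index:
  assumes "m > 0"
  shows "finite_index k (lat m k)"
proof -
  define R where "R = {f::zvec. \<forall>x. (x \<in> {..<k} \<longrightarrow> f x \<in> {0..<int m}) \<and> (x \<notin> {..<k} \<longrightarrow> f x = 0)}"
  have fR: "finite R" unfolding R_def by (rule finite_set_of_finite_funs) auto
  have "(\<lambda>x. vadd x ` lat m k) ` Zv k \<subseteq> (\<lambda>x. vadd x ` lat m k) ` R"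
  proof
    fix S assume "S \<in> (\<lambda>x. vadd x ` lat m k) ` Zv k"
    then obtain x where x: "x \<in> Zv k" "S = vadd x ` lat m k" by auto
    define r where "r = (\<lambda>i. if i < k then x i mod int m else 0)"
    have "r \<in> R" using assms unfolding R_def r_def by auto
    moreover have "vsub x r \<in> lat m k"
      using x(1) unfolding lat_def Zv_def vsub_def r_def
      by (auto simp: mod_eq_0_iff_dvd[symmetric] mod_diff_left_eq[symmetric])
    ultimately show "S \<in> (\<lambda>x. vadd x ` lat m k) ` R"
      using lat_coset_eq x(2) by blast
  qed
  then show ?thesis unfolding finite_index_def using fR finite_subset by blast
qed


lemma rat_polyhedron_append:
  "rat_polyhedron k (P @ Q) = rat_polyhedron k P \<inter> rat_polyhedron k Q"
  unfolding rat_polyhedron_def by auto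

lemma refine:
  assumes "cover k ps1" "cover k ps2"
  shows "\<exists>ps. cover k ps \<and> (\<forall>R\<in>set ps. \<exists>P\<in>set ps1. \<exists>Q\<in>set ps2.
            rat_polyhedron k R = rat_polyhedron k P \<inter> rat_polyhedron k Q)"
proof (intro exI conjI)
  let ?ps = "map (\<lambda>(P, Q). P @ Q) (List.product ps1 ps2)"
  show "cover k ?ps"
    using assms unfolding cover_def by (fastforce simp: rat_polyhedron_append)
  show "\<forall>R\<in>set ?ps. \<exists>P\<in>set ps1. \<exists>Q\<in>set ps2.
            rat_polyhedron k R = rat_polyhedron k P \<inter> rat_polyhedron k Q"
    by (auto simp: rat_polyhedron_append)
qed

lemma agree_mono: "S' \<subseteq> S \<Longrightarrow> agree k S X Per \<Longrightarrow> agree k S' X Per"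
  unfolding agree_def by blast

lemma cover_triv: "cover k [[]]"
  unfolding cover_def rat_polyhedron_def int_to_real_def Zv_def by auto

lemma good_const: "good k {n. b}"
proof -
  have h: "\<exists>m>0. \<exists>Per. periodic k m Per \<and> agree k (rat_polyhedron k []) {n. b} Per"
  proof (intro exI conjI)
    show "(1::nat) > 0" by simp
    show "periodic k 1 {n. b}" unfolding periodic_def by auto
    show "agree k (rat_polyhedron k []) {n. b} {n. b}" unfolding agree_def by auto
  qed
  show ?thesis unfolding good_def
    by (rule exI[of _ "[[]]"]) (use h cover_triv[of k] in auto)
qed

lemma good_binop:
  assumes "good k X" "good k Y"
  shows "good k {n. h (n \<in> X) (n \<in> Y)}"
proof -
  obtain ps1 where c1: "cover k ps1" and p1: "\<forall>P\<in>set ps1. \<exists>m>0. \<exists>Per.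
      periodic k m Per \<and> agree k (rat_polyhedron k P) X Per"
    using assms(1) unfolding good_def by blast
  obtain ps2 where c2: "cover k ps2" and p2: "\<forall>P\<in>set ps2. \<exists>m>0. \<exists>Per.
      periodic k m Per \<and> agree k (rat_polyhedron k P) Y Per"
    using assms(2) unfolding good_def by blast
  obtain ps where c: "cover k ps" and r: "\<forall>R\<in>set ps. \<exists>P\<in>set ps1. \<exists>Q\<in>set ps2.
            rat_polyhedron k R = rat_polyhedron k P \<inter> rat_polyhedron k Q"
    using refine[OF c1 c2] by blast
  show ?thesis unfolding good_def
  proof (rule exI, intro conjI ballI)
    show "cover k ps" by (rule c)
    fix R assume "R \<in> set ps"
    then obtain P Q where PQ: "P \<in> set ps1" "Q \<in> set ps2"
      "rat_polyhedron k R = rat_polyhedron k P \<inter> rat_polyhedron k Q" using r by blast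
    obtain m1 Per1 where m1: "m1 > 0" "periodic k m1 Per1" "agree k (rat_polyhedron k P) X Per1"
      using p1 PQ(1) by blast
    obtain m2 Per2 where m2: "m2 > 0" "periodic k m2 Per2" "agree k (rat_polyhedron k Q) Y Per2"
      using p2 PQ(2) by blast
    have a1: "agree k (rat_polyhedron k R) X Per1" using agree_mono[OF _ m1(3)] PQ(3) by blast
    have a2: "agree k (rat_polyhedron k R) Y Per2" using agree_mono[OF _ m2(3)] PQ(3) by blast
    have q1: "periodic k (m1 * m2) Per1" using periodic_mult m1(2) by blast
    have q2: "periodic k (m1 * m2) Per2" using periodic_mult2 m2(2) by blast
    show "\<exists>m>0. \<exists>Per. periodic k m Per \<and> agree k (rat_polyhedron k R) {n. h (n \<in> X) (n \<in> Y)} Per"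
    proof (intro exI conjI)
      show "m1 * m2 > 0" using m1 m2 by simp
      show "periodic k (m1 * m2) {n. h (n \<in> Per1) (n \<in> Per2)}"
        using q1 q2 unfolding periodic_def by auto
      show "agree k (rat_polyhedron k R) {n. h (n \<in> X) (n \<in> Y)} {n. h (n \<in> Per1) (n \<in> Per2)}"
        using a1 a2 unfolding agree_def by auto
    qed
  qed
qed

lemma good_cong: "good k X \<Longrightarrow> X \<inter> Zv k = Y \<inter> Zv k \<Longrightarrow> good k Y"
  unfolding good_def agree_def by (metis IntI Int_iff)

lemma good_Un: "good k X \<Longrightarrow> good k Y \<Longrightarrow> good k (X \<union> Y)"
  using good_binop[of k X Y "(\<or>)"] by (simp add: Un_def)

lemma good_Int: "good k X \<Longrightarrow> good k Y \<Longrightarrow> good k (X \<inter> Y)"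
  using good_binop[of k X Y "(\<and>)"] by (simp add: Int_def)

lemma good_Compl: "good k X \<Longrightarrow> good k (- X)"
  using good_binop[of k X X "\<lambda>a b. \<not> a"] by (simp add: Compl_eq)

lemma good_UN:
  assumes "finite J" "\<forall>j\<in>J. good k (X j)"
  shows "good k (\<Union>j\<in>J. X j)"
  using assms
proof (induction J rule: finite_induct)
  case empty
  then show ?case using good_const[of k False] by simp
next
  case (insert x F)
  then show ?case using good_Un by simp
qed

lemma good_family:
  assumes "finite I" "\<forall>i\<in>I. good k (X i)"
  shows "\<exists>ps. cover k ps \<and> (\<forall>P\<in>set ps. \<exists>m>0. \<exists>Per. \<forall>i\<in>I.
           periodic k m (Per i) \<and> agree k (rat_polyhedron k P) (X i) (Per i))"
  using assms
proof (induction I rule: finite_induct)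
  case empty
  then show ?case using cover_triv by (intro exI[of _ "[[]]"]) auto
next
  case (insert x F)
  then obtain ps1 where c1: "cover k ps1" and p1: "\<forall>P\<in>set ps1. \<exists>m>0. \<exists>Per. \<forall>i\<in>F.
           periodic k m (Per i) \<and> agree k (rat_polyhedron k P) (X i) (Per i)" by auto
  obtain ps2 where c2: "cover k ps2" and p2: "\<forall>P\<in>set ps2. \<exists>m>0. \<exists>Per.
      periodic k m Per \<and> agree k (rat_polyhedron k P) (X x) Per"
    using insert.prems unfolding good_def by auto
  obtain ps where c: "cover k ps" and r: "\<forall>R\<in>set ps. \<exists>P\<in>set ps1. \<exists>Q\<in>set ps2.
            rat_polyhedron k R = rat_polyhedron k P \<inter> rat_polyhedron k Q"
    using refine[OF c1 c2] by blast
  show ?case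
  proof (rule exI, intro conjI ballI)
    show "cover k ps" by (rule c)
    fix R assume "R \<in> set ps"
    then obtain P Q where PQ: "P \<in> set ps1" "Q \<in> set ps2"
      "rat_polyhedron k R = rat_polyhedron k P \<inter> rat_polyhedron k Q" using r by blast
    obtain m1 Per1 where m1: "m1 > 0" "\<forall>i\<in>F. periodic k m1 (Per1 i) \<and> agree k (rat_polyhedron k P) (X i) (Per1 i)"
      using p1 PQ(1) by blast
    obtain m2 Per2 where m2: "m2 > 0" "periodic k m2 Per2" "agree k (rat_polyhedron k Q) (X x) Per2"
      using p2 PQ(2) by blast
    show "\<exists>m>0. \<exists>Per. \<forall>i\<in>insert x F.
           periodic k m (Per i) \<and> agree k (rat_polyhedron k R) (X i) (Per i)"
    proof (intro exI conjI ballI)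
      show "m1 * m2 > 0" using m1 m2 by simp
      fix i assume i: "i \<in> insert x F"
      show "periodic k (m1 * m2) ((Per1(x := Per2)) i)"
        using i m1 m2 periodic_mult periodic_mult2 by auto
      show "agree k (rat_polyhedron k R) (X i) ((Per1(x := Per2)) i)"
        using i m1 m2 agree_mono PQ(3) by (metis Int_lower1 Int_lower2 fun_upd_apply insert_iff)
    qed
  qed
qed


definition aff :: "nat \<Rightarrow> (zvec \<Rightarrow> int) \<Rightarrow> bool" where
  "aff k f \<longleftrightarrow> (\<exists>a b. \<forall>n. f n = (\<Sum>i<k. a i * n i) + b)"

lemma aff_const: "aff k (\<lambda>n. c)"
  unfolding aff_def by (rule exI[of _ "\<lambda>i. 0"]) simp

lemma aff_coord: "j < k \<Longrightarrow> aff k (\<lambda>n. n j)"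
  unfolding aff_def
proof (rule exI[of _ "\<lambda>i. if i = j then 1 else 0"], rule exI[of _ 0], intro allI)
  fix n :: zvec assume j: "j < k"
  have "(\<Sum>i<k. (if i = j then 1 else 0) * n i) = (\<Sum>i<k. if i = j then n i else 0)"
    by (rule sum.cong) auto
  also have "\<dots> = n j" using j by (simp add: sum.delta)
  finally show "n j = (\<Sum>i<k. (if i = j then 1 else 0) * n i) + 0" by simp
qed

lemma aff_add: "aff k f \<Longrightarrow> aff k g \<Longrightarrow> aff k (\<lambda>n. f n + g n)"
  unfolding aff_def
proof (elim exE)
  fix a b a' b' assume f: "\<forall>n. f n = (\<Sum>i<k. a i * n i) + b" and g: "\<forall>n. g n = (\<Sum>i<k. a' i * n i) + b'"
  show "\<exists>a b. \<forall>n. f n + g n = (\<Sum>i<k. a i * n i) + b"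
    by (rule exI[of _ "\<lambda>i. a i + a' i"], rule exI[of _ "b + b'"])
       (simp add: f g algebra_simps sum.distrib)
qed

lemma aff_scale: "aff k f \<Longrightarrow> aff k (\<lambda>n. c * f n)"
  unfolding aff_def
proof (elim exE)
  fix a b assume f: "\<forall>n. f n = (\<Sum>i<k. a i * n i) + b"
  show "\<exists>a b. \<forall>n. c * f n = (\<Sum>i<k. a i * n i) + b"
    by (rule exI[of _ "\<lambda>i. c * a i"], rule exI[of _ "c * b"])
       (simp add: f algebra_simps sum_distrib_left)
qed

lemma nth_beyond: "length xs \<le> j \<Longrightarrow> xs ! j = ([]::'a list) ! (j - length xs)"
proof (induction xs arbitrary: j)
  case Nil then show ?case by simp
next
  case (Cons x xs)
  then obtain j' where "j = Suc j'" by (cases j) auto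
  with Cons show ?case by simp
qed

lemma aff_env: "aff k (\<lambda>n. map n [0..<k] ! j)"
proof (cases "j < k")
  case True
  then show ?thesis using aff_coord[OF True] by simp
next
  case False
  then have "map n [0..<k] ! j = ([]::int list) ! (j - k)" for n
    using nth_beyond[of "map n [0..<k]" j] by simp
  then show ?thesis using aff_const by simp
qed

lemma aff_Inum: "aff k (\<lambda>n. Inum (map n [0..<k]) t)"
proof (induction t)
  case (C x) then show ?case by (simp add: aff_const)
next
  case (Bound x) then show ?case by (simp add: aff_env)
next
  case (CN x1a x2a t) then show ?case by (simp add: aff_env aff_add aff_scale)
next
  case (Neg t) then show ?case using aff_scale[of k _ "-1"] by simp
next
  case (Add t1 t2) then show ?case by (simp add: aff_add)
next
  case (Sub t1 t2) then show ?case
    using aff_add[OF Sub(1) aff_scale[OF Sub(2), of "-1"]] by simp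
next
  case (Mul x1a t) then show ?case by (simp add: aff_scale)
qed

lemma poly_mem:
  assumes "n \<in> Zv k"
  shows "int_to_real n \<in> rat_polyhedron k (map (\<lambda>(a', c'). (\<lambda>i. of_int (a' i), of_int c')) L)
     \<longleftrightarrow> (\<forall>(a', c')\<in>set L. (\<Sum>i<k. a' i * n i) \<le> c')"
proof -
  have key: "((\<Sum>i<k. real_of_rat (of_int (a' i)) * int_to_real n i) \<le> real_of_rat (of_int c'))
     \<longleftrightarrow> (\<Sum>i<k. a' i * n i) \<le> c'" for a' c'
  proof -
    have h: "(\<Sum>i<k. real_of_rat (of_int (a' i)) * int_to_real n i) = real_of_int (\<Sum>i<k. a' i * n i)"
      by (simp add: int_to_real_def)
    show ?thesis unfolding h by (simp only: of_rat_of_int_eq of_int_le_iff)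
  qed
  have z: "\<forall>i\<ge>k. int_to_real n i = 0" using assms by (simp add: Zv_def int_to_real_def)
  show ?thesis unfolding rat_polyhedron_def
  proof
    assume "int_to_real n \<in> {x. (\<forall>i\<ge>k. x i = 0) \<and>
           (\<forall>(a, b)\<in>set (map (\<lambda>(a', c'). (\<lambda>i. rat_of_int (a' i), rat_of_int c')) L).
               (\<Sum>i<k. real_of_rat (a i) * x i) \<le> real_of_rat b)}"
    then have "\<forall>(a', c')\<in>set L. (\<Sum>i<k. real_of_rat (of_int (a' i)) * int_to_real n i) \<le> real_of_rat (of_int c')"
      by fastforce
    then show "\<forall>(a', c')\<in>set L. (\<Sum>i<k. a' i * n i) \<le> c'" using key by blast
  next
    assume "\<forall>(a', c')\<in>set L. (\<Sum>i<k. a' i * n i) \<le> c'"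
    then have "\<forall>(a', c')\<in>set L. (\<Sum>i<k. real_of_rat (of_int (a' i)) * int_to_real n i) \<le> real_of_rat (of_int c')"
      using key by blast
    then show "int_to_real n \<in> {x. (\<forall>i\<ge>k. x i = 0) \<and>
           (\<forall>(a, b)\<in>set (map (\<lambda>(a', c'). (\<lambda>i. rat_of_int (a' i), rat_of_int c')) L).
               (\<Sum>i<k. real_of_rat (a i) * x i) \<le> real_of_rat b)}"
      using z by fastforce
  qed
qed




lemma good_atom:
  assumes "aff k l" "m > 0" and R: "\<forall>v w. sgn v = sgn w \<longrightarrow> int m dvd (v - w) \<longrightarrow> (R v \<longleftrightarrow> R w)"
  shows "good k {n. R (l n)}"
proof -
  obtain a b where l: "\<forall>n. l n = (\<Sum>i<k. a i * n i) + b" using assms(1) unfolding aff_def by blast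
  define na where "na = (\<lambda>i. - a i)"
  define f where "f = (\<lambda>(a' :: nat \<Rightarrow> int, c' :: int). (\<lambda>i. rat_of_int (a' i), rat_of_int c'))"
  define P1 where "P1 = map f [(a, -1 - b)]"
  define P2 where "P2 = map f [(a, - b), (na, b)]"
  define P3 where "P3 = map f [(na, b - 1)]"
  have sna: "(\<Sum>i<k. na i * n i) = - (\<Sum>i<k. a i * n i)" for n
    by (simp add: na_def sum_negf)
  have m1: "int_to_real n \<in> rat_polyhedron k P1 \<longleftrightarrow> l n \<le> -1" if "n \<in> Zv k" for n
    using poly_mem[OF that, of "[(a, -1 - b)]"] l unfolding P1_def f_def by auto
  have m2: "int_to_real n \<in> rat_polyhedron k P2 \<longleftrightarrow> l n = 0" if "n \<in> Zv k" for n
    using poly_mem[OF that, of "[(a, - b), (na, b)]"] l sna[of n] unfolding P2_def f_def by auto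
  have m3: "int_to_real n \<in> rat_polyhedron k P3 \<longleftrightarrow> l n \<ge> 1" if "n \<in> Zv k" for n
    using poly_mem[OF that, of "[(na, b - 1)]"] l sna[of n] unfolding P3_def f_def by auto
  have per: "l x mod int m = l y mod int m" if "x \<in> Zv k" "y \<in> Zv k" "vsub x y \<in> lat m k" for x y
  proof -
    have "l x - l y = (\<Sum>i<k. a i * (x i - y i))"
      using l by (simp add: sum_subtractf right_diff_distrib)
    moreover have "int m dvd (\<Sum>i<k. a i * (x i - y i))"
      using that(3) unfolding lat_def vsub_def by (auto intro!: dvd_sum)
    ultimately show ?thesis by (simp add: mod_eq_dvd_iff)
  qed
  have mpos: "int m > 0" using assms(2) by simp
  show ?thesis unfolding good_def
  proof (rule exI[of _ "[P1, P2, P3]"], intro conjI ballI)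
    show "cover k [P1, P2, P3]" unfolding cover_def
    proof
      fix n assume n: "n \<in> Zv k"
      have "l n \<le> -1 \<or> l n = 0 \<or> l n \<ge> 1" by linarith
      then show "\<exists>P\<in>set [P1, P2, P3]. int_to_real n \<in> rat_polyhedron k P"
        using m1[OF n] m2[OF n] m3[OF n] by auto
    qed
    fix P assume "P \<in> set [P1, P2, P3]"
    then consider "P = P1" | "P = P2" | "P = P3" by auto
    then show "\<exists>m>0. \<exists>Per. periodic k m Per \<and> agree k (rat_polyhedron k P) {n. R (l n)} Per"
    proof cases
      case 1
      show ?thesis
      proof (intro exI conjI)
        show "m > 0" by (rule assms(2))
        show "periodic k m {n. R (l n mod int m - int m)}"
          unfolding periodic_def mem_Collect_eq by (metis per)
        show "agree k (rat_polyhedron k P) {n. R (l n)} {n. R (l n mod int m - int m)}"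
          unfolding agree_def 1
        proof (intro ballI impI)
          fix n assume n: "n \<in> Zv k" "int_to_real n \<in> rat_polyhedron k P1"
          then have neg: "l n \<le> -1" using m1 by blast
          have "l n mod int m < int m" using mpos by (rule pos_mod_bound)
          then have "l n mod int m - int m < 0" by linarith
          then have s: "sgn (l n) = sgn (l n mod int m - int m)" using neg by (simp add: sgn_if)
          have "l n - (l n mod int m - int m) = int m * (l n div int m + 1)"
            using div_mult_mod_eq[of "l n" "int m"] by (simp add: algebra_simps)
          then have dv: "int m dvd (l n - (l n mod int m - int m))" by (metis dvd_triv_left)
          have "R (l n) \<longleftrightarrow> R (l n mod int m - int m)" using R s dv by blast
          then show "n \<in> {n. R (l n)} \<longleftrightarrow> n \<in> {n. R (l n mod int m - int m)}"
            by (simp only: mem_Collect_eq)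
        qed
      qed
    next
      case 2
      show ?thesis
      proof (intro exI conjI)
        show "m > 0" by (rule assms(2))
        show "periodic k m {n. R 0}" unfolding periodic_def by auto
        show "agree k (rat_polyhedron k P) {n. R (l n)} {n. R 0}"
          unfolding agree_def 2 mem_Collect_eq using m2 by (metis (full_types))
      qed
    next
      case 3
      show ?thesis
      proof (intro exI conjI)
        show "m > 0" by (rule assms(2))
        show "periodic k m {n. R (l n mod int m + int m)}"
          unfolding periodic_def mem_Collect_eq by (metis per)
        show "agree k (rat_polyhedron k P) {n. R (l n)} {n. R (l n mod int m + int m)}"
          unfolding agree_def 3
        proof (intro ballI impI)
          fix n assume n: "n \<in> Zv k" "int_to_real n \<in> rat_polyhedron k P3"
          then have pos: "l n \<ge> 1" using m3 by blast
          have "l n mod int m \<ge> 0" using mpos by (rule pos_mod_sign)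
          then have "l n mod int m + int m > 0" using mpos by linarith
          then have s: "sgn (l n) = sgn (l n mod int m + int m)" using pos by (simp add: sgn_if)
          have "l n - (l n mod int m + int m) = int m * (l n div int m - 1)"
            using div_mult_mod_eq[of "l n" "int m"] by (simp add: algebra_simps)
          then have dv: "int m dvd (l n - (l n mod int m + int m))" by (metis dvd_triv_left)
          have "R (l n) \<longleftrightarrow> R (l n mod int m + int m)" using R s dv by blast
          then show "n \<in> {n. R (l n)} \<longleftrightarrow> n \<in> {n. R (l n mod int m + int m)}"
            by (simp only: mem_Collect_eq)
        qed
      qed
    qed
  qed
qed


lemma good_num:
  assumes "m > 0" "\<forall>v w. sgn v = sgn w \<longrightarrow> int m dvd (v - w) \<longrightarrow> (R v \<longleftrightarrow> R w)"
  shows "good k {n. R (Inum (map n [0..<k]) t)}"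
  using good_atom[OF aff_Inum assms] .

lemma sgn_facts: "sgn (v::int) = sgn w \<Longrightarrow> (v < 0 \<longleftrightarrow> w < 0) \<and> (v = 0 \<longleftrightarrow> w = 0) \<and> (v > 0 \<longleftrightarrow> w > 0)"
  by (auto simp: sgn_if split: if_splits)

lemma dvd_cond: "\<forall>v w. sgn v = sgn w \<longrightarrow> int (if i = 0 then 1 else nat \<bar>i\<bar>) dvd (v - w) \<longrightarrow> (i dvd v \<longleftrightarrow> i dvd (w::int))"
proof (intro allI impI)
  fix v w :: int assume s: "sgn v = sgn w" and d: "int (if i = 0 then 1 else nat \<bar>i\<bar>) dvd (v - w)"
  show "i dvd v \<longleftrightarrow> i dvd w"
  proof (cases "i = 0")
    case True then show ?thesis using sgn_facts[OF s] by simp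
  next
    case False
    then have "i dvd (v - w)" using d by simp
    then have "i dvd v \<longleftrightarrow> i dvd (v - w) + w" by simp
    also have "\<dots> \<longleftrightarrow> i dvd w" using \<open>i dvd (v - w)\<close> by (rule dvd_add_right_iff)
    finally show ?thesis .
  qed
qed

lemma sgn_all: "sgn (v::int) = sgn w \<Longrightarrow> (v < 0 \<longleftrightarrow> w < 0) \<and> (v \<le> 0 \<longleftrightarrow> w \<le> 0) \<and> (v > 0 \<longleftrightarrow> w > 0)
   \<and> (v \<ge> 0 \<longleftrightarrow> w \<ge> 0) \<and> (v = 0 \<longleftrightarrow> w = 0) \<and> (v \<noteq> 0 \<longleftrightarrow> w \<noteq> 0)"
  by (auto simp: sgn_if split: if_splits)

lemma sgn_cond:
  fixes Q :: "int \<Rightarrow> bool"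
  assumes "\<And>v w. sgn v = sgn w \<Longrightarrow> Q v \<longleftrightarrow> Q w"
  shows "\<forall>v w. sgn v = sgn w \<longrightarrow> int 1 dvd (v - w) \<longrightarrow> (Q v \<longleftrightarrow> Q w)"
  using assms by blast

lemma ndvd_cond: "\<forall>v w. sgn v = sgn w \<longrightarrow> int (if i = 0 then 1 else nat \<bar>i\<bar>) dvd (v - w) \<longrightarrow> (\<not> i dvd v \<longleftrightarrow> \<not> i dvd (w::int))"
  using dvd_cond[of i] by blast

lemma good_qfree: "qfree p \<Longrightarrow> good k {n. Ifm bbs (map n [0..<k]) p}"
proof (induction p)
  case T then show ?case using good_const[of k True] by simp
next
  case F then show ?case using good_const[of k False] by simp
next
  case (Lt t)
  have "good k {n. (\<lambda>v. v < 0) (Inum (map n [0..<k]) t)}"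
    by (rule good_num[OF _ sgn_cond]) (simp, blast dest: sgn_all)
  then show ?case by simp
next
  case (Le t)
  have "good k {n. (\<lambda>v. v \<le> 0) (Inum (map n [0..<k]) t)}"
    by (rule good_num[OF _ sgn_cond]) (simp, blast dest: sgn_all)
  then show ?case by simp
next
  case (Gt t)
  have "good k {n. (\<lambda>v. v > 0) (Inum (map n [0..<k]) t)}"
    by (rule good_num[OF _ sgn_cond]) (simp, blast dest: sgn_all)
  then show ?case by simp
next
  case (Ge t)
  have "good k {n. (\<lambda>v. v \<ge> 0) (Inum (map n [0..<k]) t)}"
    by (rule good_num[OF _ sgn_cond]) (simp, blast dest: sgn_all)
  then show ?case by simp
next
  case (Eq t)
  have "good k {n. (\<lambda>v. v = 0) (Inum (map n [0..<k]) t)}"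
    by (rule good_num[OF _ sgn_cond]) (simp, blast dest: sgn_all)
  then show ?case by simp
next
  case (NEq t)
  have "good k {n. (\<lambda>v. v \<noteq> 0) (Inum (map n [0..<k]) t)}"
    by (rule good_num[OF _ sgn_cond]) (simp, blast dest: sgn_all)
  then show ?case by simp
next
  case (Dvd i t)
  have "good k {n. (\<lambda>v. i dvd v) (Inum (map n [0..<k]) t)}"
    by (rule good_num[OF _ dvd_cond]) simp
  then show ?case by simp
next
  case (NDvd i t)
  have "good k {n. (\<lambda>v. \<not> i dvd v) (Inum (map n [0..<k]) t)}"
    by (rule good_num[OF _ ndvd_cond]) simp
  then show ?case by simp
next
  case (Not p)
  then show ?case using good_Compl[of k "{n. Ifm bbs (map n [0..<k]) p}"] by (simp add: Compl_eq)
next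
  case (And p q)
  then show ?case using good_binop[of k "{n. Ifm bbs (map n [0..<k]) p}" "{n. Ifm bbs (map n [0..<k]) q}" "(\<and>)"] by simp
next
  case (Or p q)
  then show ?case using good_binop[of k "{n. Ifm bbs (map n [0..<k]) p}" "{n. Ifm bbs (map n [0..<k]) q}" "(\<or>)"] by simp
next
  case (Imp p q)
  then show ?case using good_binop[of k "{n. Ifm bbs (map n [0..<k]) p}" "{n. Ifm bbs (map n [0..<k]) q}" "(\<longrightarrow>)"] by simp
next
  case (Iff p q)
  then show ?case using good_binop[of k "{n. Ifm bbs (map n [0..<k]) p}" "{n. Ifm bbs (map n [0..<k]) q}" "(=)"] by simp
next
  case (E p) then show ?case by simp
next
  case (A p) then show ?case by simp
next
  case (Closed j) then show ?case using good_const[of k "bbs ! j"] by simp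
next
  case (NClosed j) then show ?case using good_const[of k "\<not> bbs ! j"] by simp
qed


fun exs :: "nat \<Rightarrow> fm \<Rightarrow> fm" where
  "exs 0 p = p"
| "exs (Suc m) p = exs m (E p)"

lemma Ifm_exs: "Ifm bbs bs (exs m p) \<longleftrightarrow> (\<exists>cs. length cs = m \<and> Ifm bbs (cs @ bs) p)"
proof (induction m arbitrary: p)
  case 0 then show ?case by simp
next
  case (Suc m)
  have "Ifm bbs bs (exs (Suc m) p) \<longleftrightarrow> (\<exists>cs x. length cs = m \<and> Ifm bbs (x # cs @ bs) p)"
    using Suc by simp
  also have "\<dots> \<longleftrightarrow> (\<exists>cs. length cs = Suc m \<and> Ifm bbs (cs @ bs) p)"
  proof
    assume "\<exists>cs x. length cs = m \<and> Ifm bbs (x # cs @ bs) p"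
    then obtain cs x where "length cs = m" "Ifm bbs (x # cs @ bs) p" by blast
    then show "\<exists>cs. length cs = Suc m \<and> Ifm bbs (cs @ bs) p"
      by (intro exI[of _ "x # cs"]) simp
  next
    assume "\<exists>cs. length cs = Suc m \<and> Ifm bbs (cs @ bs) p"
    then obtain cs where "length cs = Suc m" "Ifm bbs (cs @ bs) p" by blast
    then show "\<exists>cs x. length cs = m \<and> Ifm bbs (x # cs @ bs) p"
      by (cases cs) auto
  qed
  finally show ?case .
qed

definition conjs :: "fm list \<Rightarrow> fm" where "conjs ps = foldr And ps T"

lemma Ifm_conjs: "Ifm bbs bs (conjs ps) \<longleftrightarrow> (\<forall>p\<in>set ps. Ifm bbs bs p)"
  unfolding conjs_def by (induction ps) auto

definition lsum :: "(nat \<Rightarrow> num) \<Rightarrow> nat list \<Rightarrow> num" where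
  "lsum f js = foldr (\<lambda>j acc. Add (f j) acc) js (C 0)"

lemma Inum_lsum: "Inum bs (lsum f js) = (\<Sum>j\<leftarrow>js. Inum bs (f j))"
  unfolding lsum_def by (induction js) auto

definition monfm :: "nat \<Rightarrow> zvec \<Rightarrow> zvec list \<Rightarrow> fm" where
  "monfm k a ws = exs (length ws) (conjs (map (\<lambda>j. Ge (Bound j)) [0..<length ws] @
     map (\<lambda>i. Eq (Sub (Bound (length ws + i)) (Add (C (a i))
        (lsum (\<lambda>j. Mul ((ws ! j) i) (Bound j)) [0..<length ws])))) [0..<k]))"

lemma ball_two: "(\<forall>p\<in>set (map f [0..<m] @ map g [0..<k]). Q p) \<longleftrightarrow> (\<forall>j<m. Q (f j)) \<and> (\<forall>i<k. Q (g i))"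
  by auto

lemma Ifm_monfm:
  "Ifm bbs (map n [0..<k]) (monfm k a ws) \<longleftrightarrow>
     (\<exists>cs. length cs = length ws \<and> (\<forall>j<length ws. 0 \<le> cs ! j) \<and>
        (\<forall>i<k. n i = a i + (\<Sum>j<length ws. (ws ! j) i * cs ! j)))"
proof -
  let ?m = "length ws"
  have e1: "(cs @ map n [0..<k]) ! j = cs ! j" if "length cs = ?m" "j < ?m" for cs j
    using that by (simp add: nth_append)
  have e2: "(cs @ map n [0..<k]) ! (?m + i) = n i" if "length cs = ?m" "i < k" for cs i
    using that by (simp add: nth_append)
  have e1': "Inum (cs @ map n [0..<k]) (Bound j) = cs ! j" if "length cs = ?m" "j < ?m" for cs j
    using e1[OF that] by simp
  have e2': "Inum (cs @ map n [0..<k]) (Bound (?m + i)) = n i" if "length cs = ?m" "i < k" for cs i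
    using e2[OF that] by simp
  have s: "(\<Sum>j\<leftarrow>[0..<?m]. (ws ! j) i * Inum (cs @ map n [0..<k]) (Bound j))
      = (\<Sum>j<?m. (ws ! j) i * cs ! j)" if "length cs = ?m" for cs i
  proof -
    have "(\<Sum>j\<leftarrow>[0..<?m]. (ws ! j) i * Inum (cs @ map n [0..<k]) (Bound j))
        = (\<Sum>j\<leftarrow>[0..<?m]. (ws ! j) i * cs ! j)"
      by (rule arg_cong[where f = sum_list], rule map_cong) (auto simp: e1 that)
    also have "\<dots> = (\<Sum>j<?m. (ws ! j) i * cs ! j)"
      using sum_set_upt_conv_sum_list_nat[of "\<lambda>j. (ws ! j) i * cs ! j" 0 ?m]
      by (simp add: atLeast0LessThan)
    finally show ?thesis .
  qed
  have inner: "(\<forall>p\<in>set (map (\<lambda>j. Ge (Bound j)) [0..<?m] @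
     map (\<lambda>i. Eq (Sub (Bound (?m + i)) (Add (C (a i))
        (lsum (\<lambda>j. Mul ((ws ! j) i) (Bound j)) [0..<?m])))) [0..<k]). Ifm bbs (cs @ map n [0..<k]) p)
     \<longleftrightarrow> (\<forall>j<?m. 0 \<le> cs ! j) \<and> (\<forall>i<k. n i = a i + (\<Sum>j<?m. (ws ! j) i * cs ! j))"
    if "length cs = ?m" for cs
    unfolding ball_two using that by (simp add: e1' e2' s Inum_lsum del: Inum.simps(2))
  show ?thesis unfolding monfm_def Ifm_exs Ifm_conjs using inner by blast
qed


lemma mon_char:
  assumes n: "n \<in> Zv k" and a: "a \<in> Zv k" and ws: "set ws \<subseteq> Zv k"
  shows "(\<exists>cs. length cs = length ws \<and> (\<forall>j<length ws. 0 \<le> cs ! j) \<and>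
        (\<forall>i<k. n i = a i + (\<Sum>j<length ws. (ws ! j) i * cs ! j)))
     \<longleftrightarrow> n \<in> vadd a ` nat_span ws"
proof
  assume "\<exists>cs. length cs = length ws \<and> (\<forall>j<length ws. 0 \<le> cs ! j) \<and>
        (\<forall>i<k. n i = a i + (\<Sum>j<length ws. (ws ! j) i * cs ! j))"
  then obtain cs where cs: "length cs = length ws" "\<forall>j<length ws. 0 \<le> cs ! j"
     "\<forall>i<k. n i = a i + (\<Sum>j<length ws. (ws ! j) i * cs ! j)" by blast
  define c where "c = (\<lambda>j. nat (cs ! j))"
  have "n = vadd a (lincomb (\<lambda>j. int (c j)) ws)"
  proof
    fix i
    have sm: "(\<Sum>j<length ws. int (c j) * (ws ! j) i) = (\<Sum>j<length ws. (ws ! j) i * cs ! j)"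
      by (rule sum.cong) (auto simp: c_def cs(2))
    show "n i = vadd a (lincomb (\<lambda>j. int (c j)) ws) i"
    proof (cases "i < k")
      case True
      then show ?thesis using cs(3) sm by (simp add: vadd_def lincomb_def)
    next
      case False
      have "(ws ! j) i = 0" if "j < length ws" for j
      proof -
        have "ws ! j \<in> Zv k" using ws nth_mem[OF that] by blast
        then show ?thesis using False unfolding Zv_def by simp
      qed
      then have "(\<Sum>j<length ws. int (c j) * (ws ! j) i) = 0" by simp
      then show ?thesis using n a False by (simp add: vadd_def lincomb_def Zv_def)
    qed
  qed
  then show "n \<in> vadd a ` nat_span ws" unfolding nat_span_def by blast
next
  assume "n \<in> vadd a ` nat_span ws"
  then obtain c :: "nat \<Rightarrow> nat" where c: "n = vadd a (lincomb (\<lambda>j. int (c j)) ws)"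
    unfolding nat_span_def by blast
  show "\<exists>cs. length cs = length ws \<and> (\<forall>j<length ws. 0 \<le> cs ! j) \<and>
        (\<forall>i<k. n i = a i + (\<Sum>j<length ws. (ws ! j) i * cs ! j))"
  proof (intro exI conjI allI impI)
    let ?cs = "map (\<lambda>j. int (c j)) [0..<length ws]"
    show "length ?cs = length ws" by simp
    show "0 \<le> ?cs ! j" if "j < length ws" for j using that by simp
    show "n i = a i + (\<Sum>j<length ws. (ws ! j) i * ?cs ! j)" for i
    proof -
      have "(\<Sum>j<length ws. (ws ! j) i * ?cs ! j) = (\<Sum>j<length ws. int (c j) * (ws ! j) i)"
        by (rule sum.cong) auto
      then show ?thesis using c by (simp add: vadd_def lincomb_def)
    qed
  qed
qed

lemma good_mon:
  assumes a: "a \<in> Zv k" and ws: "set ws \<subseteq> Zv k"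
  shows "good k (vadd a ` nat_span ws)"
proof -
  have g: "good k {n. Ifm [] (map n [0..<k]) (pa (monfm k a ws))}"
    by (rule good_qfree) (simp add: mirqe)
  have "Ifm [] (map n [0..<k]) (pa (monfm k a ws)) \<longleftrightarrow> n \<in> vadd a ` nat_span ws" if "n \<in> Zv k" for n
    using mon_char[OF that a ws] Ifm_monfm[of "[]" n k a ws] mirqe[of "[]" "map n [0..<k]" "monfm k a ws"]
    by simp
  then have "{n. Ifm [] (map n [0..<k]) (pa (monfm k a ws))} \<inter> Zv k = vadd a ` nat_span ws \<inter> Zv k"
    by blast
  then show ?thesis using good_cong[OF g] by blast
qed


definition proj :: "nat \<Rightarrow> zvec \<Rightarrow> zvec" where
  "proj k g = (\<lambda>i. if i < k then g i else 0)"

lemma proj_Zv: "proj k g \<in> Zv k"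
  unfolding proj_def Zv_def by auto

lemma proj_vadd: "proj k (vadd x y) = vadd (proj k x) (proj k y)"
  unfolding proj_def vadd_def by auto

lemma proj_lincomb: "proj k (lincomb c vs) = lincomb c (map (proj k) vs)"
proof
  fix i
  show "proj k (lincomb c vs) i = lincomb c (map (proj k) vs) i"
  proof (cases "i < k")
    case True
    then show ?thesis unfolding proj_def lincomb_def by (auto intro!: sum.cong)
  next
    case False
    then show ?thesis unfolding proj_def lincomb_def by simp
  qed
qed

lemma proj_mon: "proj k ` (vadd q ` nat_span vs) = vadd (proj k q) ` nat_span (map (proj k) vs)"
proof -
  have "proj k ` nat_span vs = {proj k (lincomb (\<lambda>j. int (c j)) vs) | c. True}"
    unfolding nat_span_def by blast
  then have "nat_span (map (proj k) vs) = proj k ` nat_span vs"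
    unfolding nat_span_def by (simp add: proj_lincomb)
  then show ?thesis by (auto simp: proj_vadd image_image)
qed

lemma good_region:
  assumes "semisimple m S"
  shows "good k (proj k ` S)"
proof -
  obtain parts :: "(zvec \<times> zvec list) list" where
    S: "S = (\<Union>(q, vs) \<in> set parts. vadd q ` nat_span vs)"
    using assms unfolding semisimple_def by blast
  have "proj k ` S = (\<Union>x \<in> set parts. (\<lambda>(q, vs). proj k ` (vadd q ` nat_span vs)) x)"
    unfolding S by auto
  moreover have "good k (\<Union>x \<in> set parts. (\<lambda>(q, vs). proj k ` (vadd q ` nat_span vs)) x)"
  proof (rule good_UN)
    show "finite (set parts)" by simp
    show "\<forall>x\<in>set parts. good k ((\<lambda>(q, vs). proj k ` (vadd q ` nat_span vs)) x)"
    proof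
      fix x assume "x \<in> set parts"
      obtain q vs where x: "x = (q, vs)" by (cases x)
      have "good k (vadd (proj k q) ` nat_span (map (proj k) vs))"
        by (rule good_mon) (auto simp: proj_Zv)
      then show "good k ((\<lambda>(q, vs). proj k ` (vadd q ` nat_span vs)) x)"
        unfolding x by (simp add: proj_mon)
    qed
  qed
  ultimately show ?thesis by simp
qed

lemma emb_Zv: "q \<in> Zv d \<Longrightarrow> emb k n q \<in> Zv (k + d)"
  unfolding emb_def Zv_def by auto

lemma good_family_support:
  fixes actf :: "zvec \<Rightarrow> zvec \<Rightarrow> zvec \<Rightarrow> 'k::field mat"
  assumes "constructible_family k d Qp dimf actf"
  shows "good k {n \<in> Zv k. \<exists>q\<in>Zv d. dimf n q \<noteq> 0}"
proof -
  have "\<exists>P dm (act :: zvec \<Rightarrow> zvec \<Rightarrow> 'k mat). (\<forall>n\<in>Zv k. \<forall>q\<in>Zv d. dm (emb k n q) = dimf n q)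
     \<and> constructible_gmod (k + d) P dm act"
    using assms unfolding constructible_family_def
    by - (elim exE conjE, intro exI conjI, assumption+)
  then obtain P dm and act :: "zvec \<Rightarrow> zvec \<Rightarrow> 'k mat" where
    dm: "\<forall>n\<in>Zv k. \<forall>q\<in>Zv d. dm (emb k n q) = dimf n q"
    and cg: "constructible_gmod (k + d) P dm act" by blast
  have "\<exists>(regions :: zvec set list) dI (phi :: nat \<Rightarrow> zvec \<Rightarrow> 'k mat). (\<forall>j<length regions. semisimple (k + d) (regions ! j)) \<and>
    \<Union>(set regions) = Zv (k + d) \<and>
    (\<forall>j<length regions. \<forall>g\<in>regions ! j.
            phi j g \<in> carrier_mat (dm g) (dI j) \<and> invertible_mat (phi j g))"
    using cg unfolding constructible_gmod_def
    by - (elim exE conjE, intro exI conjI, assumption+)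
  then obtain regions :: "zvec set list" and dI and phi :: "nat \<Rightarrow> zvec \<Rightarrow> 'k mat" where
    ss: "\<forall>j<length regions. semisimple (k + d) (regions ! j)" and
    un: "\<Union>(set regions) = Zv (k + d)" and
    ph: "\<forall>j<length regions. \<forall>g\<in>regions ! j.
            phi j g \<in> carrier_mat (dm g) (dI j) \<and> invertible_mat (phi j g)"
    by blast
  have dmI: "dm g = dI j" if "j < length regions" "g \<in> regions ! j" for j g
  proof -
    have "phi j g \<in> carrier_mat (dm g) (dI j)" "invertible_mat (phi j g)" using ph that by auto
    then show ?thesis unfolding invertible_mat_def by auto
  qed
  let ?J = "{j. j < length regions \<and> dI j \<noteq> 0}"
  have eq: "{n \<in> Zv k. \<exists>q\<in>Zv d. dimf n q \<noteq> 0} \<inter> Zv k = (\<Union>j\<in>?J. proj k ` (regions ! j)) \<inter> Zv k"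
  proof
    show "{n \<in> Zv k. \<exists>q\<in>Zv d. dimf n q \<noteq> 0} \<inter> Zv k \<subseteq> (\<Union>j\<in>?J. proj k ` (regions ! j)) \<inter> Zv k"
    proof
      fix n assume "n \<in> {n \<in> Zv k. \<exists>q\<in>Zv d. dimf n q \<noteq> 0} \<inter> Zv k"
      then obtain q where n: "n \<in> Zv k" and q: "q \<in> Zv d" and nz: "dimf n q \<noteq> 0" by blast
      have "emb k n q \<in> \<Union>(set regions)" using un emb_Zv[OF q] by blast
      then obtain j where j: "j < length regions" "emb k n q \<in> regions ! j"
        by (auto simp: in_set_conv_nth)
      have "dI j \<noteq> 0" using dmI[OF j] dm n q nz by simp
      moreover have "proj k (emb k n q) = n" using n unfolding proj_def emb_def Zv_def by auto
      ultimately show "n \<in> (\<Union>j\<in>?J. proj k ` (regions ! j)) \<inter> Zv k"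
        using j n by (auto intro!: image_eqI[of n "proj k" "emb k n q"])
    qed
  next
    show "(\<Union>j\<in>?J. proj k ` (regions ! j)) \<inter> Zv k \<subseteq> {n \<in> Zv k. \<exists>q\<in>Zv d. dimf n q \<noteq> 0} \<inter> Zv k"
    proof
      fix n assume "n \<in> (\<Union>j\<in>?J. proj k ` (regions ! j)) \<inter> Zv k"
      then obtain j g where j: "j < length regions" "dI j \<noteq> 0" and g: "g \<in> regions ! j"
        and n: "n = proj k g" by blast
      have "regions ! j \<in> set regions" using j(1) by simp
      then have gZ: "g \<in> Zv (k + d)" using un g by blast
      define q where "q = (\<lambda>i. g (i + k))"
      have q: "q \<in> Zv d" using gZ unfolding q_def Zv_def by auto
      have e: "emb k n q = g"
      proof
        fix i show "emb k n q i = g i" unfolding emb_def n proj_def q_def by auto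
      qed
      have nZ: "n \<in> Zv k" using n proj_Zv by simp
      have "dimf n q = dm (emb k n q)" using dm nZ q by simp
      also have "\<dots> = dI j" using e dmI[OF j(1) g] by simp
      finally have "dimf n q \<noteq> 0" using j(2) by simp
      then show "n \<in> {n \<in> Zv k. \<exists>q\<in>Zv d. dimf n q \<noteq> 0} \<inter> Zv k"
        using q nZ by blast
    qed
  qed
  have "good k (\<Union>j\<in>?J. proj k ` (regions ! j))"
  proof (rule good_UN)
    show "finite ?J" by simp
    show "\<forall>j\<in>?J. good k (proj k ` (regions ! j))" using ss good_region by blast
  qed
  then show ?thesis by (rule good_cong) (rule eq[symmetric])
qed

lemma final:
  fixes F :: "nat set \<Rightarrow> nat"
  assumes "\<forall>i\<in>{1..r}. constructible_family k d Qp (dimf i) (actf i)"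
  shows "piecewise_quasiconstant k {n \<in> Zv k. \<exists>i\<in>{1..r}. \<exists>q\<in>Zv d. dimf i n q \<noteq> 0}
           (\<lambda>n. F {i\<in>{1..r}. \<exists>q\<in>Zv d. dimf i n q \<noteq> 0})"
proof -
  let ?X = "\<lambda>i. {n \<in> Zv k. \<exists>q\<in>Zv d. dimf i n q \<noteq> 0}"
  have "\<forall>i\<in>{1..r}. good k (?X i)" using assms good_family_support by blast
  then obtain ps where c: "cover k ps" and p: "\<forall>P\<in>set ps. \<exists>m>0. \<exists>Per. \<forall>i\<in>{1..r}.
           periodic k m (Per i) \<and> agree k (rat_polyhedron k P) (?X i) (Per i)"
    using good_family[of "{1..r}" k ?X] by auto
  show ?thesis unfolding piecewise_quasiconstant_def
  proof (rule exI[of _ ps], rule conjI[OF _ ballI])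
    show "\<forall>n\<in>Zv k. \<exists>P\<in>set ps. int_to_real n \<in> rat_polyhedron k P" using c unfolding cover_def .
  next
    fix P assume "P \<in> set ps"
    then obtain m Per where m: "m > 0" and pp: "\<forall>i\<in>{1..r}.
           periodic k m (Per i) \<and> agree k (rat_polyhedron k P) (?X i) (Per i)" using p by blast
    show "\<exists>L c. subgroup_Z k L \<and> finite_index k L \<and>
            (\<forall>x\<in>Zv k. \<forall>y\<in>Zv k. vsub x y \<in> L \<longrightarrow> c x = c y) \<and>
            (\<forall>n\<in>{n \<in> Zv k. \<exists>i\<in>{1..r}. \<exists>q\<in>Zv d. dimf i n q \<noteq> 0}. int_to_real n \<in> rat_polyhedron k P \<longrightarrow>
               F {i\<in>{1..r}. \<exists>q\<in>Zv d. dimf i n q \<noteq> 0} = c n)"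
    proof (intro exI conjI)
      show "subgroup_Z k (lat m k)" by (rule lat_subgroup)
      show "finite_index k (lat m k)" using m by (rule lat_finite_index)
      show "\<forall>x\<in>Zv k. \<forall>y\<in>Zv k. vsub x y \<in> lat m k \<longrightarrow>
              F {i\<in>{1..r}. x \<in> Per i} = F {i\<in>{1..r}. y \<in> Per i}"
      proof (intro ballI impI)
        fix x y assume "x \<in> Zv k" "y \<in> Zv k" "vsub x y \<in> lat m k"
        then have "x \<in> Per i \<longleftrightarrow> y \<in> Per i" if "i \<in> {1..r}" for i
          using pp that unfolding periodic_def by blast
        then have "{i\<in>{1..r}. x \<in> Per i} = {i\<in>{1..r}. y \<in> Per i}" by blast
        then show "F {i\<in>{1..r}. x \<in> Per i} = F {i\<in>{1..r}. y \<in> Per i}" by simp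
      qed
      show "\<forall>n\<in>{n \<in> Zv k. \<exists>i\<in>{1..r}. \<exists>q\<in>Zv d. dimf i n q \<noteq> 0}. int_to_real n \<in> rat_polyhedron k P \<longrightarrow>
               F {i\<in>{1..r}. \<exists>q\<in>Zv d. dimf i n q \<noteq> 0} = F {i\<in>{1..r}. n \<in> Per i}"
      proof (intro ballI impI)
        fix n assume n: "n \<in> {n \<in> Zv k. \<exists>i\<in>{1..r}. \<exists>q\<in>Zv d. dimf i n q \<noteq> 0}"
          and inP: "int_to_real n \<in> rat_polyhedron k P"
        have nZ: "n \<in> Zv k" using n by blast
        have "(\<exists>q\<in>Zv d. dimf i n q \<noteq> 0) \<longleftrightarrow> n \<in> Per i" if "i \<in> {1..r}" for i
        proof -
          have "agree k (rat_polyhedron k P) (?X i) (Per i)" using pp that by blast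
          then have "n \<in> ?X i \<longleftrightarrow> n \<in> Per i" using nZ inP unfolding agree_def by blast
          then show ?thesis using nZ by blast
        qed
        then have "{i\<in>{1..r}. \<exists>q\<in>Zv d. dimf i n q \<noteq> 0} = {i\<in>{1..r}. n \<in> Per i}" by blast
        then show "F {i\<in>{1..r}. \<exists>q\<in>Zv d. dimf i n q \<noteq> 0} = F {i\<in>{1..r}. n \<in> Per i}" by simp
      qed
    qed
  qed
qed

theorem lemma9p2:
  fixes k d r :: nat
    and Qp :: "zvec set"
    and dimf :: "nat \<Rightarrow> zvec \<Rightarrow> zvec \<Rightarrow> nat"
    and actf :: "nat \<Rightarrow> zvec \<Rightarrow> zvec \<Rightarrow> zvec \<Rightarrow> 'k::field mat"
  assumes "affine_semigroup d Qp"
    and "int_span Qp = Zv d"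
    and "\<forall>i\<in>{1..r}. constructible_family k d Qp (dimf i) (actf i)"
  shows "piecewise_quasiconstant k {n \<in> Zv k. \<exists>i\<in>{1..r}. \<exists>q\<in>Zv d. dimf i n q \<noteq> 0}
           (\<lambda>n. Max {i\<in>{1..r}. \<exists>q\<in>Zv d. dimf i n q \<noteq> 0})
       \<and> piecewise_quasiconstant k {n \<in> Zv k. \<exists>i\<in>{1..r}. \<exists>q\<in>Zv d. dimf i n q \<noteq> 0}
           (\<lambda>n. Min {i\<in>{1..r}. \<exists>q\<in>Zv d. dimf i n q \<noteq> 0})"
  using final[OF assms(3), of Max] final[OF assms(3), of Min] by blast

end
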